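(* Let $p\ge1$, let $(X,d_X),(Y,d_Y),(Z,d_Z)$ be pseudo-metric spaces, and let $(W,\mu)$, $(V,\gamma)$ be probability spaces. Let $f(x;w):X\times W\to Y$ be $\alpha$ lower-Hölder in expectation and $g(y;v):Y\times V\to Z$ be $\beta$ lower-Hölder in expectation, with $\alpha,\beta\ge1$. Then $(g\circ f)(x;w,v)=g(f(x;w);v)$, with $(w,v)$ distributed according to the product measure $\mu\times\gamma$, is $\alpha\beta$ lower-Hölder in expectation. Moreover, if $f$ and $g$ are uniformly Lipschitz, then so is $g\circ f$.
   Context: A parametric function $f(x;w)$ (measurable in $w$ for each fixed $x$) with a probability measure on parameters is $\alpha$ lower-Hölder in expectation if there is $c>0$ such that $c^p\le \mathbb{E}_{w}\left[\left(\frac{d_Y(f(x;w),f(x';w))}{d_X(x,x')^\alpha}\right)^p\right]$ for all $x,x'$ with $d_X(x,x')>0$. It is uniformly Lipschitz if there is $L>0$ such that $x\mapsto f(x;w)$ is $L$-Lipschitz for every parameter $w$. *)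

theory Defs
  imports "HOL-Probability.Probability"
begin

definition pseudo_metric :: "('a \<Rightarrow> 'a \<Rightarrow> real) \<Rightarrow> bool" where
  "pseudo_metric d \<longleftrightarrow>
     (\<forall>x y. 0 \<le> d x y) \<and> (\<forall>x. d x x = 0) \<and> (\<forall>x y. d x y = d y x) \<and>
     (\<forall>x y z. d x z \<le> d x y + d y z)"

definition lower_holder_exp ::
  "'w measure \<Rightarrow> ('x \<Rightarrow> 'x \<Rightarrow> real) \<Rightarrow> ('y \<Rightarrow> 'y \<Rightarrow> real)
    \<Rightarrow> ('x \<Rightarrow> 'w \<Rightarrow> 'y) \<Rightarrow> real \<Rightarrow> real \<Rightarrow> bool" where
  "lower_holder_exp M dX dY f \<alpha> p \<longleftrightarrow>
     (\<exists>c>0. \<forall>x x'. dX x x' > 0 \<longrightarrow>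
        ennreal (c powr p) \<le>
          (\<integral>\<^sup>+ w. ennreal ((dY (f x w) (f x' w) / (dX x x' powr \<alpha>)) powr p) \<partial>M))"

definition uniformly_lipschitz ::
  "'w measure \<Rightarrow> ('x \<Rightarrow> 'x \<Rightarrow> real) \<Rightarrow> ('y \<Rightarrow> 'y \<Rightarrow> real)
    \<Rightarrow> ('x \<Rightarrow> 'w \<Rightarrow> 'y) \<Rightarrow> bool" where
  "uniformly_lipschitz M dX dY f \<longleftrightarrow>
     (\<exists>L>0. \<forall>w\<in>space M. \<forall>x x'. dY (f x w) (f x' w) \<le> L * dX x x')"

definition param_comp ::
  "('y \<Rightarrow> 'v \<Rightarrow> 'z) \<Rightarrow> ('x \<Rightarrow> 'w \<Rightarrow> 'y) \<Rightarrow> 'x \<Rightarrow> 'w \<times> 'v \<Rightarrow> 'z" where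
  "param_comp g f x wv = g (f x (fst wv)) (snd wv)"

end

theory Submission
  imports Defs
begin

lemma tangent_powr:
  fixes t K \<beta> :: real
  assumes "0 \<le> t" "0 < K" "1 < \<beta>"
  shows "\<beta> * K powr (\<beta> - 1) * t \<le> t powr \<beta> + (\<beta> - 1) * K powr \<beta>"
proof -
  define q where "q = \<beta> / (\<beta> - 1)"
  have q1: "q > 1" using assms unfolding q_def by (simp add: field_simps)
  have pq: "1/\<beta> + 1/q = 1" using assms unfolding q_def by (simp add: field_simps)
  have Y: "t * K powr (\<beta> - 1) \<le> t powr \<beta> / \<beta> + (K powr (\<beta> - 1)) powr q / q"
    by (rule Youngs_inequality) (use assms q1 pq in auto)
  have "(K powr (\<beta> - 1)) powr q = K powr \<beta>"
    using assms by (simp add: powr_powr q_def)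
  moreover have "1/q = (\<beta> - 1)/\<beta>" using assms by (simp add: q_def)
  ultimately have "t * K powr (\<beta> - 1) \<le> t powr \<beta> / \<beta> + K powr \<beta> * ((\<beta> - 1)/\<beta>)"
    using Y by (metis divide_inverse inverse_eq_divide)
  hence "\<beta> * (t * K powr (\<beta> - 1)) \<le> \<beta> * (t powr \<beta> / \<beta> + K powr \<beta> * ((\<beta> - 1)/\<beta>))"
    using assms by (intro mult_left_mono) auto
  moreover have "\<beta> * (t powr \<beta> / \<beta> + K powr \<beta> * ((\<beta> - 1)/\<beta>)) = t powr \<beta> + (\<beta> - 1) * K powr \<beta>"
    using assms by (simp add: field_simps)
  ultimately show ?thesis by (simp add: mult_ac)
qed

lemma jensen_powr:
  assumes "prob_space M" and Ym[measurable]: "Y \<in> borel_measurable M" and Y0: "\<And>w. 0 \<le> Y w"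
    and "1 \<le> \<beta>" "0 \<le> K" and KY: "ennreal K \<le> (\<integral>\<^sup>+w. ennreal (Y w) \<partial>M)"
  shows "ennreal (K powr \<beta>) \<le> (\<integral>\<^sup>+ w. ennreal (Y w powr \<beta>) \<partial>M)"
proof (cases "K = 0 \<or> \<beta> = 1")
  case True
  then show ?thesis
  proof
    assume "\<beta> = 1" thus ?thesis using KY Y0 \<open>0\<le>K\<close> by simp
  qed simp
next
  case False
  hence K: "K > 0" and b: "\<beta> > 1" using assms by auto
  interpret prob_space M by fact
  define A where "A = \<beta> * K powr (\<beta> - 1)"
  define B where "B = (\<beta> - 1) * K powr \<beta>"
  have A0: "A \<ge> 0" and B0: "B \<ge> 0" using b K by (auto simp: A_def B_def)
  have pw: "ennreal A * ennreal (Y w) \<le> ennreal (Y w powr \<beta>) + ennreal B" for w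
  proof -
    have "A * Y w \<le> Y w powr \<beta> + B"
      using tangent_powr[OF Y0 K b] by (simp add: A_def B_def)
    thus ?thesis using A0 B0 Y0[of w]
      by (simp add: ennreal_mult[symmetric] ennreal_plus[symmetric] del: ennreal_plus)
  qed
  have "ennreal A * ennreal K \<le> ennreal A * (\<integral>\<^sup>+w. ennreal (Y w) \<partial>M)"
    using KY by (rule mult_left_mono) simp
  also have "\<dots> = (\<integral>\<^sup>+w. ennreal A * ennreal (Y w) \<partial>M)"
    by (rule nn_integral_cmult[symmetric]) simp
  also have "\<dots> \<le> (\<integral>\<^sup>+w. ennreal (Y w powr \<beta>) + ennreal B \<partial>M)"
    by (rule nn_integral_mono) (rule pw)
  also have "\<dots> = (\<integral>\<^sup>+w. ennreal (Y w powr \<beta>) \<partial>M) + ennreal B"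
    by (subst nn_integral_add) (auto simp: emeasure_space_1)
  finally have 1: "ennreal A * ennreal K \<le> (\<integral>\<^sup>+w. ennreal (Y w powr \<beta>) \<partial>M) + ennreal B" .
  have "A * K = K powr \<beta> + B"
    using K b by (simp add: A_def B_def powr_diff field_simps)
  hence "ennreal A * ennreal K = ennreal B + ennreal (K powr \<beta>)"
    using A0 B0 K by (simp add: ennreal_mult[symmetric] ennreal_plus[symmetric] add.commute del: ennreal_plus)
  with 1 have "ennreal B + ennreal (K powr \<beta>) \<le> ennreal B + (\<integral>\<^sup>+w. ennreal (Y w powr \<beta>) \<partial>M)"
    by (simp add: add.commute)
  thus ?thesis by (simp add: ennreal_add_left_cancel_le)
qed


lemma scale_int:
  assumes "E > 0" and hm: "(\<lambda>w. ennreal (h w powr p)) \<in> borel_measurable M"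
  shows "(\<integral>\<^sup>+w. ennreal ((h w / E) powr p) \<partial>M) = (\<integral>\<^sup>+w. ennreal (h w powr p) \<partial>M) * ennreal (1 / E powr p)"
proof -
  have "(\<integral>\<^sup>+w. ennreal ((h w / E) powr p) \<partial>M) = (\<integral>\<^sup>+w. ennreal (h w powr p) * ennreal (1 / E powr p) \<partial>M)"
    by (rule nn_integral_cong) (simp add: powr_divide ennreal_mult[symmetric])
  also have "\<dots> = (\<integral>\<^sup>+w. ennreal (h w powr p) \<partial>M) * ennreal (1 / E powr p)"
    by (rule nn_integral_multc[OF hm])
  finally show ?thesis .
qed

lemma lh_bound:
  assumes hyp: "\<And>y y'. dY y y' > 0 \<Longrightarrow> ennreal (c powr p) \<le>
          (\<integral>\<^sup>+ w. ennreal ((dZ (g y w) (g y' w) / (dY y y' powr \<beta>)) powr p) \<partial>N)"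
    and meas: "\<And>y y'. (\<lambda>w. ennreal (dZ (g y w) (g y' w) powr p)) \<in> borel_measurable N"
    and "1 \<le> p" and "0 \<le> dY y y'"
  shows "ennreal (c powr p * dY y y' powr (\<beta> * p)) \<le> (\<integral>\<^sup>+ w. ennreal (dZ (g y w) (g y' w) powr p) \<partial>N)"
proof (cases "dY y y' = 0")
  case True then show ?thesis by simp
next
  case False
  hence d: "dY y y' > 0" using assms by auto
  define E where "E = dY y y' powr \<beta>"
  have E: "E > 0" using d by (simp add: E_def)
  let ?I = "(\<integral>\<^sup>+ w. ennreal (dZ (g y w) (g y' w) powr p) \<partial>N)"
  have "ennreal (c powr p) \<le> ?I * ennreal (1 / E powr p)"
    using hyp[OF d] scale_int[OF E meas] by (simp add: E_def)
  hence "ennreal (c powr p) * ennreal (E powr p) \<le> ?I * ennreal (1 / E powr p) * ennreal (E powr p)"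
    by (rule mult_right_mono) simp
  also have "\<dots> = ?I"
    using E by (simp add: mult.assoc ennreal_mult[symmetric])
  finally show ?thesis
    using E d by (simp add: E_def ennreal_mult powr_powr)
qed

theorem mainTheorem5:
  fixes dX :: "'x \<Rightarrow> 'x \<Rightarrow> real" and dY :: "'y \<Rightarrow> 'y \<Rightarrow> real"
    and dZ :: "'z \<Rightarrow> 'z \<Rightarrow> real"
    and M :: "'w measure" and N :: "'v measure"
    and f :: "'x \<Rightarrow> 'w \<Rightarrow> 'y" and g :: "'y \<Rightarrow> 'v \<Rightarrow> 'z"
    and p \<alpha> \<beta> :: real
  assumes "1 \<le> p"
    and "pseudo_metric dX" and "pseudo_metric dY" and "pseudo_metric dZ"
    and "prob_space M" and "prob_space N"
    and f_meas: "\<And>x x'. (\<lambda>w. dY (f x w) (f x' w)) \<in> borel_measurable M"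
    and g_meas: "\<And>y y'. (\<lambda>v. dZ (g y v) (g y' v)) \<in> borel_measurable N"
    and gf_meas: "\<And>x x'. (\<lambda>wv. dZ (param_comp g f x wv) (param_comp g f x' wv))
                           \<in> borel_measurable (M \<Otimes>\<^sub>M N)"
    and "lower_holder_exp M dX dY f \<alpha> p"
    and "lower_holder_exp N dY dZ g \<beta> p"
    and "1 \<le> \<alpha>" and "1 \<le> \<beta>"
  shows "lower_holder_exp (M \<Otimes>\<^sub>M N) dX dZ (param_comp g f) (\<alpha> * \<beta>) p
       \<and> (uniformly_lipschitz M dX dY f \<and> uniformly_lipschitz N dY dZ g
            \<longrightarrow> uniformly_lipschitz (M \<Otimes>\<^sub>M N) dX dZ (param_comp g f))"
  proof (intro conjI impI)
  note f_meas[measurable] g_meas[measurable] gf_meas[measurable]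
  interpret M: prob_space M by fact
  interpret N: prob_space N by fact
  interpret MN: pair_sigma_finite M N
    by (simp add: pair_sigma_finite_def M.sigma_finite_measure_axioms N.sigma_finite_measure_axioms)
  have dY0: "\<And>y y'. 0 \<le> dY y y'" and dX0: "\<And>x x'. 0 \<le> dX x x'" and dZ0: "\<And>z z'. 0 \<le> dZ z z'"
    using assms(2-4) unfolding pseudo_metric_def by auto
  obtain cf where cf: "cf > 0" and hf: "\<And>x x'. dX x x' > 0 \<Longrightarrow> ennreal (cf powr p) \<le>
          (\<integral>\<^sup>+ w. ennreal ((dY (f x w) (f x' w) / (dX x x' powr \<alpha>)) powr p) \<partial>M)"
    using assms(10) unfolding lower_holder_exp_def by blast
  obtain cg where cg: "cg > 0" and hg: "\<And>y y'. dY y y' > 0 \<Longrightarrow> ennreal (cg powr p) \<le>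
          (\<integral>\<^sup>+ v. ennreal ((dZ (g y v) (g y' v) / (dY y y' powr \<beta>)) powr p) \<partial>N)"
    using assms(11) unfolding lower_holder_exp_def by blast
  have G: "ennreal (cg powr p * dY y y' powr (\<beta> * p)) \<le> (\<integral>\<^sup>+ v. ennreal (dZ (g y v) (g y' v) powr p) \<partial>N)" for y y'
    by (rule lh_bound[where dY=dY and dZ=dZ and g=g and N=N and c=cg, OF hg]) (use assms(1) dY0 in auto)
  have F: "ennreal (cf powr p * dX x x' powr (\<alpha> * p)) \<le> (\<integral>\<^sup>+ w. ennreal (dY (f x w) (f x' w) powr p) \<partial>M)" for x x'
    by (rule lh_bound[where dY=dX and dZ=dY and g=f and N=M and c=cf, OF hf]) (use assms(1) dX0 in auto)
  define c where "c = cg * cf powr \<beta>"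
  show "lower_holder_exp (M \<Otimes>\<^sub>M N) dX dZ (param_comp g f) (\<alpha> * \<beta>) p"
    unfolding lower_holder_exp_def
  proof (intro exI[of _ c] conjI allI impI)
    show "c > 0" using cf cg by (simp add: c_def)
    fix x x' assume D: "dX x x' > 0"
    define K where "K = cf powr p * dX x x' powr (\<alpha> * p)"
    have K0: "K \<ge> 0" by (simp add: K_def)
    have J: "ennreal (K powr \<beta>) \<le> (\<integral>\<^sup>+ w. ennreal ((dY (f x w) (f x' w) powr p) powr \<beta>) \<partial>M)"
      by (rule jensen_powr[OF assms(5) _ _ assms(13) K0]) (use F[of x x'] in \<open>auto simp: K_def\<close>)
    have gm: "(\<lambda>wv. ennreal (dZ (param_comp g f x wv) (param_comp g f x' wv) powr p)) \<in> borel_measurable (M \<Otimes>\<^sub>M N)"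
      by measurable
    have eq1: "(\<integral>\<^sup>+ wv. ennreal ((dZ (param_comp g f x wv) (param_comp g f x' wv) / dX x x' powr (\<alpha> * \<beta>)) powr p) \<partial>(M \<Otimes>\<^sub>M N))
        = (\<integral>\<^sup>+ wv. ennreal (dZ (param_comp g f x wv) (param_comp g f x' wv) powr p) \<partial>(M \<Otimes>\<^sub>M N)) * ennreal (1 / (dX x x' powr (\<alpha> * \<beta>)) powr p)"
      by (rule scale_int[OF _ gm]) (use D in auto)
    have eq2: "(\<integral>\<^sup>+ wv. ennreal (dZ (param_comp g f x wv) (param_comp g f x' wv) powr p) \<partial>(M \<Otimes>\<^sub>M N))
        = (\<integral>\<^sup>+ w. \<integral>\<^sup>+ v. ennreal (dZ (g (f x w) v) (g (f x' w) v) powr p) \<partial>N \<partial>M)"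
      by (subst N.nn_integral_fst[symmetric, OF gm]) (simp add: param_comp_def)
    have "ennreal (cg powr p) * ennreal (K powr \<beta>) \<le> ennreal (cg powr p) * (\<integral>\<^sup>+ w. ennreal ((dY (f x w) (f x' w) powr p) powr \<beta>) \<partial>M)"
      by (rule mult_left_mono[OF J]) simp
    also have "\<dots> = (\<integral>\<^sup>+ w. ennreal (cg powr p) * ennreal ((dY (f x w) (f x' w) powr p) powr \<beta>) \<partial>M)"
      by (rule nn_integral_cmult[symmetric]) simp
    also have "\<dots> \<le> (\<integral>\<^sup>+ w. \<integral>\<^sup>+ v. ennreal (dZ (g (f x w) v) (g (f x' w) v) powr p) \<partial>N \<partial>M)"
      by (rule nn_integral_mono) (use G in \<open>auto simp: ennreal_mult[symmetric] powr_powr mult.commute\<close>)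
    finally have low: "ennreal (cg powr p) * ennreal (K powr \<beta>) \<le> (\<integral>\<^sup>+ w. \<integral>\<^sup>+ v. ennreal (dZ (g (f x w) v) (g (f x' w) v) powr p) \<partial>N \<partial>M)" .
    have 1: "ennreal (cg powr p) * ennreal (K powr \<beta>) * ennreal (1 / (dX x x' powr (\<alpha> * \<beta>)) powr p)
       \<le> (\<integral>\<^sup>+ wv. ennreal ((dZ (param_comp g f x wv) (param_comp g f x' wv) / dX x x' powr (\<alpha> * \<beta>)) powr p) \<partial>(M \<Otimes>\<^sub>M N))"
      unfolding eq1 eq2 by (rule mult_right_mono[OF low]) simp
    have "cg powr p * K powr \<beta> * (1 / (dX x x' powr (\<alpha> * \<beta>)) powr p) = c powr p"
      using D cf cg by (simp add: K_def c_def powr_mult powr_powr powr_divide mult_ac)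
    hence "ennreal (cg powr p) * ennreal (K powr \<beta>) * ennreal (1 / (dX x x' powr (\<alpha> * \<beta>)) powr p) = ennreal (c powr p)"
      by (simp add: ennreal_mult[symmetric])
    with 1 show "ennreal (c powr p) \<le> (\<integral>\<^sup>+ wv. ennreal ((dZ (param_comp g f x wv) (param_comp g f x' wv) / dX x x' powr (\<alpha> * \<beta>)) powr p) \<partial>(M \<Otimes>\<^sub>M N))"
      by simp
  qed
next
  assume "uniformly_lipschitz M dX dY f \<and> uniformly_lipschitz N dY dZ g"
  then obtain Lf Lg where Lf: "Lf > 0" "\<And>w x x'. w \<in> space M \<Longrightarrow> dY (f x w) (f x' w) \<le> Lf * dX x x'"
    and Lg: "Lg > 0" "\<And>v y y'. v \<in> space N \<Longrightarrow> dZ (g y v) (g y' v) \<le> Lg * dY y y'"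
    unfolding uniformly_lipschitz_def by blast
  show "uniformly_lipschitz (M \<Otimes>\<^sub>M N) dX dZ (param_comp g f)"
    unfolding uniformly_lipschitz_def
  proof (intro exI[of _ "Lg * Lf"] conjI ballI allI)
    show "Lg * Lf > 0" using Lf Lg by simp
    fix wv x x' assume "wv \<in> space (M \<Otimes>\<^sub>M N)"
    hence w: "fst wv \<in> space M" and v: "snd wv \<in> space N" by (auto simp: space_pair_measure)
    have "dZ (param_comp g f x wv) (param_comp g f x' wv) \<le> Lg * dY (f x (fst wv)) (f x' (fst wv))"
      using Lg(2)[OF v] by (simp add: param_comp_def)
    also have "\<dots> \<le> Lg * (Lf * dX x x')"
      using Lf(2)[OF w] Lg(1) by (intro mult_left_mono) auto
    finally show "dZ (param_comp g f x wv) (param_comp g f x' wv) \<le> Lg * Lf * dX x x'" by (simp add: mult_ac)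
  qed
qed

end
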